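(* Let $M\in\mathbb N$, $M\ge1$, and $x_0,x_1\in\{x:|x-1|\le p^{-M}\}$. If $\lambda_0,\lambda_1\in\Lambda$ satisfy $|\lambda_0-\lambda_1|=|x_0-x_1|$, then $$|Q^M_{\lambda_0}(x_0)-Q^M_{\lambda_1}(x_1)|=p^M|\lambda_0-\lambda_1|.$$
   Context: Let $p$ be a prime, $\mathbb C_p$ with $p$-adic absolute value, $|p|=1/p$. $\Lambda=\{\lambda\in\mathbb C_p:|\lambda-1|<1\}$, $P_\lambda(z)=\frac{\lambda}{p}z^p+\left(1-\frac{\lambda}{p}\right)z^{p+1}$, $\rho=p^{-1/(p-1)}$. Fix $\hat r\in|\mathbb C_p^*|$, $\hat r>1$, $B=\{z:|z|\le\hat r\}$; $\mathcal H(B)$ is the ring of power series $\sum a_iz^i$ convergent on $B$ with norm $\|f\|_B=\sup_i|a_i|\hat r^{\,i}$. Fix $Q\in\mathcal H(B)$ with $\|Q\|_B<\rho$, $Q^*_\lambda=P_\lambda+Q$, and let $h(\lambda)$ be the unique fixed point of $Q^*_\lambda$ in $\{z:|z-1|\le|Q(1)|/p\}$. Define $Q_\lambda(z)=P_\lambda(z+h(\lambda)-1)+Q(z+h(\lambda)-1)+1-h(\lambda)$ for $z\in B$; $Q_\lambda^n$ denotes the $n$-th iterate. *)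

theory Defs
  imports Complex_Main "HOL-Computational_Algebra.Polynomial" "HOL-Computational_Algebra.Primes"
begin

text \<open>An abstract model of the field C_p: a field 'a with an absolute value absv that
  (i) is a non-archimedean absolute value, (ii) restricts on the integers to the p-adic
  absolute value with |p| = 1/p, (iii) is complete, (iv) 'a is algebraically closed, and
  (v) the algebraic numbers (roots of nonzero integer polynomials) are dense.
  These properties characterise C_p up to isometric isomorphism.\<close>

definition is_Cp :: "nat \<Rightarrow> ('a::field \<Rightarrow> real) \<Rightarrow> bool" where
  "is_Cp p absv \<longleftrightarrow>
     (\<forall>x. absv x \<ge> 0) \<and>
     (\<forall>x. absv x = 0 \<longleftrightarrow> x = 0) \<and>
     (\<forall>x y. absv (x * y) = absv x * absv y) \<and>
     (\<forall>x y. absv (x + y) \<le> max (absv x) (absv y)) \<and>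
     (\<forall>n::int. n \<noteq> 0 \<longrightarrow> absv (of_int n) = real p powr (- real (multiplicity (int p) n))) \<and>
     (\<forall>X::nat \<Rightarrow> 'a. (\<forall>e>0. \<exists>N. \<forall>m\<ge>N. \<forall>n\<ge>N. absv (X m - X n) < e)
          \<longrightarrow> (\<exists>L. (\<lambda>n. absv (X n - L)) \<longlonglongrightarrow> 0)) \<and>
     (\<forall>q::'a poly. degree q > 0 \<longrightarrow> (\<exists>x. poly q x = 0)) \<and>
     (\<forall>x. \<forall>e>0. \<exists>y. absv (x - y) < e \<and>
          (\<exists>q::int poly. q \<noteq> 0 \<and> poly (map_poly of_int q) y = 0))"

definition ps_sums :: "('a::field \<Rightarrow> real) \<Rightarrow> (nat \<Rightarrow> 'a) \<Rightarrow> 'a \<Rightarrow> 'a \<Rightarrow> bool" where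
  "ps_sums absv a z s \<longleftrightarrow> (\<lambda>n. absv ((\<Sum>i<n. a i * z ^ i) - s)) \<longlonglongrightarrow> 0"

definition ps_eval :: "('a::field \<Rightarrow> real) \<Rightarrow> (nat \<Rightarrow> 'a) \<Rightarrow> 'a \<Rightarrow> 'a" where
  "ps_eval absv a z = (THE s. ps_sums absv a z s)"

definition in_H :: "('a::field \<Rightarrow> real) \<Rightarrow> real \<Rightarrow> (nat \<Rightarrow> 'a) \<Rightarrow> bool" where
  "in_H absv r a \<longleftrightarrow> (\<forall>z. absv z \<le> r \<longrightarrow> (\<exists>s. ps_sums absv a z s))"

definition H_norm :: "('a::field \<Rightarrow> real) \<Rightarrow> real \<Rightarrow> (nat \<Rightarrow> 'a) \<Rightarrow> real" where
  "H_norm absv r a = (SUP i. absv (a i) * r ^ i)"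

definition P_lam :: "nat \<Rightarrow> 'a::field \<Rightarrow> 'a \<Rightarrow> 'a" where
  "P_lam p lam z = lam / of_nat p * z ^ p + (1 - lam / of_nat p) * z ^ (p + 1)"

definition Qstar :: "nat \<Rightarrow> ('a::field \<Rightarrow> real) \<Rightarrow> (nat \<Rightarrow> 'a) \<Rightarrow> 'a \<Rightarrow> 'a \<Rightarrow> 'a" where
  "Qstar p absv a lam z = P_lam p lam z + ps_eval absv a z"

definition hfix :: "nat \<Rightarrow> ('a::field \<Rightarrow> real) \<Rightarrow> (nat \<Rightarrow> 'a) \<Rightarrow> 'a \<Rightarrow> 'a" where
  "hfix p absv a lam = (THE z. absv (z - 1) \<le> absv (ps_eval absv a 1) / real p \<and> Qstar p absv a lam z = z)"

definition Qlam :: "nat \<Rightarrow> ('a::field \<Rightarrow> real) \<Rightarrow> (nat \<Rightarrow> 'a) \<Rightarrow> 'a \<Rightarrow> 'a \<Rightarrow> 'a" where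
  "Qlam p absv a lam z =
     (let h = hfix p absv a lam in
      P_lam p lam (z + h - 1) + ps_eval absv a (z + h - 1) + 1 - h)"

end

theory Submission
  imports Defs
begin

locale cpl =
  fixes p :: nat and absv :: "'a::field \<Rightarrow> real"
  assumes prime: "prime p" and cp: "is_Cp p absv"
begin

lemma nonneg[simp]: "absv x \<ge> 0" using cp unfolding is_Cp_def by blast
lemma zero_iff[simp]: "absv x = 0 \<longleftrightarrow> x = 0" using cp unfolding is_Cp_def by blast
lemma abs0[simp]: "absv 0 = 0" by simp
lemma mult[simp]: "absv (x * y) = absv x * absv y" using cp unfolding is_Cp_def by blast
lemma ultra: "absv (x + y) \<le> max (absv x) (absv y)" using cp unfolding is_Cp_def by blast
lemma ofint: "n \<noteq> 0 \<Longrightarrow> absv (of_int n) = real p powr (- real (multiplicity (int p) n))"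
  using cp unfolding is_Cp_def by blast
lemma complete: "(\<forall>e>0. \<exists>N. \<forall>m\<ge>N. \<forall>n\<ge>N. absv (X m - X n) < e)
          \<Longrightarrow> (\<exists>L. (\<lambda>n. absv (X n - L)) \<longlonglongrightarrow> 0)"
  using cp unfolding is_Cp_def by blast

lemma p2: "p \<ge> 2" using prime prime_ge_2_nat by blast

lemma one[simp]: "absv 1 = 1"
proof -
  have "absv 1 = absv 1 * absv 1" using mult[of 1 1] by simp
  moreover have "absv 1 \<noteq> 0" by simp
  ultimately show ?thesis by (metis mult_cancel_left2)
qed

lemma minus[simp]: "absv (- x) = absv x"
proof -
  have "absv (-1) * absv (-1) = 1" using mult[of "-1" "-1"] by simp
  hence "absv (-1) = 1" using nonneg[of "-1"]
    by (metis abs_of_nonneg mult_cancel_right1 mult_minus_right mult_minus1 mult_nonneg_nonneg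
        nonneg real_sqrt_abs2 real_sqrt_one)
  thus ?thesis using mult[of "-1" x] by simp
qed

lemma commute: "absv (x - y) = absv (y - x)"
  by (metis minus minus_diff_eq)

lemma power[simp]: "absv (x ^ n) = absv x ^ n"
  by (induction n) auto

lemma divide[simp]: "absv (x / y) = absv x / absv y"
proof (cases "y = 0")
  case False
  have "absv (x / y) * absv y = absv x" using False by (metis mult divide_eq_eq)
  thus ?thesis using False by (simp add: eq_divide_eq)
qed simp

lemma ultra_diff: "absv (x - y) \<le> max (absv x) (absv y)"
  using ultra[of x "-y"] by simp

lemma ultra_le: "absv x \<le> B \<Longrightarrow> absv y \<le> B \<Longrightarrow> absv (x + y) \<le> B"
  using ultra[of x y] by linarith

lemma ultra_le_diff: "absv x \<le> B \<Longrightarrow> absv y \<le> B \<Longrightarrow> absv (x - y) \<le> B"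
  using ultra_diff[of x y] by linarith

lemma ultra_lt: "absv x < B \<Longrightarrow> absv y < B \<Longrightarrow> absv (x + y) < B"
  using ultra[of x y] by linarith

lemma ultra_strict: assumes "absv y < absv x" shows "absv (x + y) = absv x"
proof -
  have "absv x = absv ((x + y) + (- y))" by simp
  also have "\<dots> \<le> max (absv (x + y)) (absv (-y))" by (rule ultra)
  finally have "absv x \<le> absv (x + y)" using assms by auto
  moreover have "absv (x + y) \<le> absv x" using ultra[of x y] assms by linarith
  ultimately show ?thesis by linarith
qed

lemma sum_le: "finite A \<Longrightarrow> (\<And>k. k \<in> A \<Longrightarrow> absv (f k) \<le> B) \<Longrightarrow> 0 \<le> B \<Longrightarrow> absv (sum f A) \<le> B"
  by (induction A rule: finite_induct) (auto intro!: ultra_le)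

lemma ofint_le1: "absv (of_int n) \<le> 1"
proof (cases "n = 0")
  case False
  have "real p powr (- real (multiplicity (int p) n)) \<le> real p powr 0"
    using p2 by (intro powr_mono) auto
  thus ?thesis using ofint[OF False] p2 by simp
qed simp

lemma ofnat_le1: "absv (of_nat n) \<le> 1"
  using ofint_le1[of "int n"] by simp

lemma absp: "absv (of_nat p :: 'a) = 1 / real p"
proof -
  have "multiplicity (int p) (int p) = 1"
    by (rule multiplicity_self) (use p2 in auto)
  hence "absv (of_int (int p) :: 'a) = real p powr (-1)" using ofint[of "int p"] p2 by simp
  thus ?thesis using p2 by (simp add: powr_minus_divide)
qed

lemma pnz: "(of_nat p :: 'a) \<noteq> 0"
proof
  assume "(of_nat p :: 'a) = 0"
  hence "absv (of_nat p :: 'a) = 0" by simp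
  thus False using absp p2 by simp
qed

lemma absp_dvd: assumes "p dvd n" shows "absv (of_nat n :: 'a) \<le> 1 / real p"
proof -
  obtain m where "n = p * m" using assms by blast
  hence "absv (of_nat n :: 'a) = absv (of_nat p :: 'a) * absv (of_nat m :: 'a)" by simp
  also have "\<dots> \<le> 1 / real p * 1" unfolding absp
    by (intro mult_left_mono ofnat_le1) auto
  finally show ?thesis by simp
qed

lemma binom: "0 < k \<Longrightarrow> k < p \<Longrightarrow> absv (of_nat (p choose k) :: 'a) \<le> 1 / real p"
  by (intro absp_dvd dvd_choose_prime) (use prime in auto)


lemma pow_lip: assumes "absv s \<le> R" "absv t \<le> R"
  shows "absv (s ^ Suc n - t ^ Suc n) \<le> absv (s - t) * R ^ n"
proof -
  have R0: "0 \<le> R" using assms(1) nonneg order_trans by blast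
  have "absv (\<Sum>j<Suc n. s ^ j * t ^ (n - j)) \<le> R ^ n"
  proof (rule sum_le)
    fix j assume j: "j \<in> {..<Suc n}"
    have "absv (s ^ j * t ^ (n - j)) = absv s ^ j * absv t ^ (n - j)" by simp
    also have "\<dots> \<le> R ^ j * R ^ (n - j)"
      using assms by (intro mult_mono power_mono) (auto simp: R0)
    also have "\<dots> = R ^ n" using j by (simp add: power_add[symmetric])
    finally show "absv (s ^ j * t ^ (n - j)) \<le> R ^ n" .
  qed (use R0 in auto)
  thus ?thesis unfolding diff_power_eq_sum[of s n t] mult
    by (intro mult_left_mono) auto
qed

definition chi :: "'a \<Rightarrow> 'a" where "chi s = s - s * (1 + s) ^ p"

lemma chi_expand: "chi s - chi t = - (\<Sum>k\<in>{1..p}. of_nat (p choose k) * (s ^ Suc k - t ^ Suc k))"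
proof -
  have e: "x * (1 + x) ^ p = (\<Sum>k\<le>p. of_nat (p choose k) * x ^ Suc k)" for x :: 'a
    using binomial_ring[of x 1 p] by (simp add: sum_distrib_left algebra_simps add.commute)
  have sp: "{..p} = insert 0 {1..p}" by auto
  have "chi s - chi t = (s - t) - (\<Sum>k\<le>p. of_nat (p choose k) * (s ^ Suc k - t ^ Suc k))"
    unfolding chi_def e by (simp add: sum_subtractf algebra_simps)
  also have "\<dots> = - (\<Sum>k\<in>{1..p}. of_nat (p choose k) * (s ^ Suc k - t ^ Suc k))"
    unfolding sp by (subst sum.insert) auto
  finally show ?thesis .
qed

lemma chi_lip: assumes "absv s \<le> 1 / real p" "absv t \<le> 1 / real p"
  shows "absv (chi s - chi t) \<le> absv (s - t) / real p"
proof -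
  have pp: "real p \<ge> 2" using p2 by simp
  have "absv (\<Sum>k\<in>{1..p}. of_nat (p choose k) * (s ^ Suc k - t ^ Suc k)) \<le> absv (s - t) / real p"
  proof (rule sum_le)
    fix k assume k: "k \<in> {1..p}"
    have d: "absv (s ^ Suc k - t ^ Suc k) \<le> absv (s - t) * (1 / real p) ^ k"
      by (rule pow_lip[OF assms])
    have q: "(1 / real p) ^ k \<le> 1 / real p"
    proof -
      have "(1 / real p) ^ k \<le> (1 / real p) ^ 1"
        using k pp by (intro power_decreasing) auto
      thus ?thesis by simp
    qed
    show "absv (of_nat (p choose k) * (s ^ Suc k - t ^ Suc k)) \<le> absv (s - t) / real p"
    proof (cases "k = p")
      case True
      have "absv (of_nat (p choose k) * (s ^ Suc k - t ^ Suc k)) = absv (s ^ Suc k - t ^ Suc k)"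
        using True by simp
      also have "\<dots> \<le> absv (s - t) * (1 / real p)" using d q
        by (meson mult_left_mono nonneg order_trans)
      finally show ?thesis by simp
    next
      case False
      hence "0 < k" "k < p" using k by auto
      hence c: "absv (of_nat (p choose k) :: 'a) \<le> 1 / real p" by (rule binom)
      have "(1 / real p) ^ k \<le> 1" using pp by (simp add: power_le_one)
      hence d': "absv (s ^ Suc k - t ^ Suc k) \<le> absv (s - t)" using d
        by (meson mult_left_le nonneg order_trans zero_le_divide_1_iff zero_le_power of_nat_0_le_iff)
      have "absv (of_nat (p choose k) * (s ^ Suc k - t ^ Suc k)) \<le> 1 / real p * absv (s - t)"
        unfolding mult by (intro mult_mono c d') auto
      thus ?thesis by simp
    qed
  qed (auto)
  thus ?thesis unfolding chi_expand minus .
qed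

lemma shift_lip: assumes "absv s \<le> 1" "absv t \<le> 1"
  shows "absv ((1 + s) ^ Suc p - (1 + t) ^ Suc p) \<le> absv (s - t)"
proof -
  have a: "absv (1 + x) \<le> 1" if "absv x \<le> 1" for x :: 'a
    using ultra_le[of 1 1 x] that by simp
  have "absv ((1 + s) ^ Suc p - (1 + t) ^ Suc p) \<le> absv ((1 + s) - (1 + t)) * 1 ^ p"
    by (rule pow_lip) (use a assms in auto)
  thus ?thesis by simp
qed


lemma lim_le:
  assumes X: "(\<lambda>n. absv (X n - s)) \<longlonglongrightarrow> 0" and Y: "(\<lambda>n. absv (Y n - s')) \<longlonglongrightarrow> 0"
    and B: "\<And>n. absv (X n - Y n) \<le> B"
  shows "absv (s - s') \<le> B"
proof (rule ccontr)
  assume "\<not> ?thesis"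
  hence lt: "B < absv (s - s')" by simp
  have B0: "0 \<le> B" using B[of 0] nonneg order_trans by blast
  define e where "e = absv (s - s') - B"
  have e: "e > 0" using lt e_def by simp
  have "eventually (\<lambda>n. absv (X n - s) < e) sequentially" using order_tendstoD(2)[OF X e] .
  moreover have "eventually (\<lambda>n. absv (Y n - s') < e) sequentially" using order_tendstoD(2)[OF Y e] .
  ultimately have "eventually (\<lambda>n. absv (X n - s) < e \<and> absv (Y n - s') < e) sequentially"
    by (rule eventually_conj)
  then obtain N where N: "\<forall>n\<ge>N. absv (X n - s) < e \<and> absv (Y n - s') < e"
    unfolding eventually_sequentially by blast
  define n where "n = N"
  have n1': "absv (X n - s) < absv (s - s')" using N n_def e_def B0 by auto
  have n1: "absv (- (X n - s)) < absv (s - s')" using n1' by (simp only: minus)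
  have n2: "absv (Y n - s') < absv (s - s')" using N n_def e_def B0 by auto
  have n3: "absv (X n - Y n) < absv (s - s')" using B[of n] lt by linarith
  have "s - s' = (- (X n - s)) + ((X n - Y n) + (Y n - s'))" by simp
  hence "absv (s - s') < absv (s - s')"
    using ultra_lt[OF n1 ultra_lt[OF n3 n2]] by (simp only:)
  thus False by simp
qed

end

locale cps = cpl p absv for p :: nat and absv :: "'a::field \<Rightarrow> real" +
  fixes r :: real and a :: "nat \<Rightarrow> 'a"
  assumes rc: "\<exists>c. c \<noteq> 0 \<and> absv c = r" and r1: "r > 1"
    and inH: "in_H absv r a" and Hn: "H_norm absv r a < real p powr (- 1 / (real p - 1))"
begin

abbreviation Qv where "Qv \<equiv> ps_eval absv a"

lemma ps_unique: "ps_sums absv a z s \<Longrightarrow> ps_sums absv a z s' \<Longrightarrow> s = s'"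
proof -
  assume "ps_sums absv a z s" "ps_sums absv a z s'"
  hence "absv (s - s') \<le> 0"
    unfolding ps_sums_def using lim_le[of "\<lambda>n. \<Sum>i<n. a i * z ^ i" s "\<lambda>n. \<Sum>i<n. a i * z ^ i" s' 0]
    by simp
  hence "absv (s - s') = 0" using nonneg[of "s - s'"] by linarith
  thus "s = s'" by simp
qed

lemma ps_eval_sums: assumes "absv z \<le> 1" shows "ps_sums absv a z (Qv z)"
proof -
  obtain s where s: "ps_sums absv a z s" using inH assms r1 unfolding in_H_def by force
  show ?thesis unfolding ps_eval_def
    by (rule theI2[of _ s]) (use s ps_unique in auto)
qed

lemma Hle1: "H_norm absv r a \<le> 1"
proof -
  have "real p powr (- 1 / (real p - 1)) \<le> real p powr 0"
    using p2 by (intro powr_mono) auto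
  thus ?thesis using Hn p2 by simp
qed

lemma coeff_le: "absv (a i) \<le> 1"
proof -
  obtain c where c: "c \<noteq> 0" "absv c = r" using rc by blast
  obtain s where s: "ps_sums absv a c s" using inH c unfolding in_H_def by force
  define S where "S n = (\<Sum>i<n. a i * c ^ i)" for n
  have "(\<lambda>n. absv (S n - s)) \<longlonglongrightarrow> 0" using s unfolding ps_sums_def S_def .
  hence "Bseq (\<lambda>n. absv (S n - s))" by (rule convergent_imp_Bseq[OF convergentI])
  then obtain K where K: "\<And>n. norm (absv (S n - s)) \<le> K" by (meson BseqE)
  have K': "absv (S n - s) \<le> K" for n using K[of n] by simp
  have bd: "absv (a n) * r ^ n \<le> K" for n
  proof -
    have "a n * c ^ n = (S (Suc n) - s) - (S n - s)" unfolding S_def by simp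
    hence "absv (a n * c ^ n) \<le> K" using ultra_le_diff K' by metis
    thus ?thesis using c by simp
  qed
  have "absv (a i) * r ^ i \<le> H_norm absv r a" unfolding H_norm_def
    by (rule cSUP_upper) (use bd in \<open>auto intro!: bdd_aboveI2\<close>)
  hence "absv (a i) * r ^ i \<le> 1" using Hle1 by linarith
  moreover have "absv (a i) \<le> absv (a i) * r ^ i"
  proof -
    have "1 \<le> r ^ i" using r1 by (simp add: one_le_power)
    hence "absv (a i) * 1 \<le> absv (a i) * r ^ i" by (intro mult_left_mono) auto
    thus ?thesis by simp
  qed
  ultimately show ?thesis by linarith
qed

lemma Q_lip: assumes "absv u \<le> 1" "absv v \<le> 1" shows "absv (Qv u - Qv v) \<le> absv (u - v)"
proof -
  have "absv ((\<Sum>i<n. a i * u ^ i) - (\<Sum>i<n. a i * v ^ i)) \<le> absv (u - v)" for n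
  proof -
    have "absv (\<Sum>i<n. a i * (u ^ i - v ^ i)) \<le> absv (u - v)"
    proof (rule sum_le)
      fix i assume "i \<in> {..<n}"
      show "absv (a i * (u ^ i - v ^ i)) \<le> absv (u - v)"
      proof (cases i)
        case (Suc m)
        have "absv (u ^ Suc m - v ^ Suc m) \<le> absv (u - v) * 1 ^ m" by (rule pow_lip) (use assms in auto)
        hence d: "absv (u ^ i - v ^ i) \<le> absv (u - v)" using Suc by simp
        have "absv (a i * (u ^ i - v ^ i)) = absv (a i) * absv (u ^ i - v ^ i)" by simp
        also have "\<dots> \<le> 1 * absv (u - v)" by (intro mult_mono coeff_le d) auto
        finally show ?thesis by simp
      qed simp
    qed auto
    thus ?thesis by (simp add: sum_subtractf algebra_simps)
  qed
  thus ?thesis using lim_le[of "\<lambda>n. \<Sum>i<n. a i * u ^ i" "Qv u" "\<lambda>n. \<Sum>i<n. a i * v ^ i" "Qv v"]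
      ps_eval_sums[OF assms(1)] ps_eval_sums[OF assms(2)] unfolding ps_sums_def
    by blast
qed

lemma Q1: "absv (Qv 1) \<le> 1"
proof -
  have "absv ((\<Sum>i<n. a i * 1 ^ i) - 0) \<le> 1" for n
    using sum_le[of "{..<n}" a 1] coeff_le by simp
  moreover have "(\<lambda>n. absv ((\<lambda>n. 0::'a) n - 0)) \<longlonglongrightarrow> 0" by simp
  ultimately have "absv (Qv 1 - 0) \<le> 1"
    using lim_le[of "\<lambda>n. \<Sum>i<n. a i * 1 ^ i" "Qv 1" "\<lambda>n. 0" 0 1] ps_eval_sums[of 1]
    unfolding ps_sums_def by simp
  thus ?thesis by simp
qed


definition F :: "'a \<Rightarrow> 'a" where "F s = (1 + s) ^ Suc p - 1 - s + Qv (1 + s)"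
definition T :: "'a \<Rightarrow> 'a \<Rightarrow> 'a" where "T lam s = (of_nat p / lam) * F s + chi s"

lemma Qstar_eq: "Qstar p absv a lam (1 + s) - (1 + s) = F s + (lam / of_nat p) * (chi s - s)"
  unfolding Qstar_def P_lam_def F_def chi_def by (simp add: algebra_simps)

lemma lam_abs: "absv (lam - 1) < 1 \<Longrightarrow> absv lam = 1"
  using ultra_strict[of "lam - 1" 1] by simp

lemma T_fix_iff: assumes "lam \<noteq> 0" shows "T lam s = s \<longleftrightarrow> Qstar p absv a lam (1 + s) = 1 + s"
proof -
  have e: "T lam s - s = (of_nat p / lam) * (Qstar p absv a lam (1 + s) - (1 + s))"
    unfolding Qstar_eq T_def using assms pnz by (simp add: field_simps)
  have c: "(of_nat p / lam) \<noteq> 0" using assms pnz by simp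
  have "T lam s = s \<longleftrightarrow> T lam s - s = 0" by simp
  also have "\<dots> \<longleftrightarrow> Qstar p absv a lam (1 + s) - (1 + s) = 0" unfolding e using c by simp
  finally show ?thesis by simp
qed

lemma divp_le: "0 \<le> x \<Longrightarrow> x / real p \<le> x"
proof -
  assume "0 \<le> x"
  hence "x / real p \<le> x / 1" using p2 by (intro divide_left_mono) auto
  thus ?thesis by simp
qed

lemma pinv_le1: "1 / real p \<le> 1" using p2 by simp

lemma F_lip: assumes "absv s \<le> 1 / real p" "absv t \<le> 1 / real p"
  shows "absv (F s - F t) \<le> absv (s - t)"
proof -
  have s1: "absv s \<le> 1" and t1: "absv t \<le> 1" using assms pinv_le1 by linarith+
  have a: "absv (1 + x) \<le> 1" if "absv x \<le> 1" for x :: 'a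
    using ultra_le[of 1 1 x] that by simp
  have "F s - F t = ((1 + s) ^ Suc p - (1 + t) ^ Suc p - (s - t)) + (Qv (1 + s) - Qv (1 + t))"
    unfolding F_def by (simp add: algebra_simps)
  moreover have "absv ((1 + s) ^ Suc p - (1 + t) ^ Suc p - (s - t)) \<le> absv (s - t)"
    by (rule ultra_le_diff[OF shift_lip[OF s1 t1]]) simp
  moreover have "absv (Qv (1 + s) - Qv (1 + t)) \<le> absv (s - t)"
    using Q_lip[OF a[OF s1] a[OF t1]] by simp
  ultimately show ?thesis by (metis ultra_le)
qed

lemma T_lip: assumes "absv (lam - 1) < 1" "absv s \<le> 1 / real p" "absv t \<le> 1 / real p"
  shows "absv (T lam s - T lam t) \<le> absv (s - t) / real p"
proof -
  have l: "absv lam = 1" using lam_abs assms(1) .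
  have "T lam s - T lam t = (of_nat p / lam) * (F s - F t) + (chi s - chi t)"
    unfolding T_def by (simp add: algebra_simps)
  moreover have "absv ((of_nat p / lam) * (F s - F t)) \<le> absv (s - t) / real p"
    using F_lip[OF assms(2,3)] l absp p2 by (simp add: divide_right_mono)
  ultimately show ?thesis using chi_lip[OF assms(2,3)] by (metis ultra_le)
qed

lemma T0: assumes "absv (lam - 1) < 1" shows "absv (T lam 0) = absv (Qv 1) / real p"
  using lam_abs[OF assms] absp unfolding T_def F_def chi_def by simp

lemma q_le: "absv (Qv 1) / real p \<le> 1 / real p"
  using Q1 p2 by (simp add: divide_right_mono)

lemma T_fix_exists: assumes lam: "absv (lam - 1) < 1"
  shows "\<exists>L. absv L \<le> absv (Qv 1) / real p \<and> T lam L = L"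
proof -
  define q where "q = absv (Qv 1) / real p"
  have q: "q \<le> 1 / real p" "0 \<le> q" using q_le q_def p2 by auto
  define X where "X n = (T lam ^^ n) 0" for n
  have XS: "X (Suc n) = T lam (X n)" for n unfolding X_def by simp
  have inv: "absv (X n) \<le> q" for n
  proof (induction n)
    case 0 thus ?case using q by (simp add: X_def)
  next
    case (Suc n)
    have "absv (T lam (X n) - T lam 0) \<le> absv (X n - 0) / real p"
      by (rule T_lip[OF lam]) (use Suc q in auto)
    also have "\<dots> \<le> q / real p" using Suc by (simp add: divide_right_mono)
    also have "\<dots> \<le> q" using q(2) by (rule divp_le)
    finally have "absv (T lam (X n) - T lam 0) \<le> q" .
    moreover have "absv (T lam 0) \<le> q" using T0[OF lam] q_def by simp
    ultimately have "absv ((T lam (X n) - T lam 0) + T lam 0) \<le> q" by (rule ultra_le)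
    thus ?case using XS by simp
  qed
  have inD: "absv (X n) \<le> 1 / real p" for n using inv[of n] q by linarith
  have step: "absv (X (Suc n) - X n) \<le> (1 / real p) ^ n * q" for n
  proof (induction n)
    case 0 thus ?case using T0[OF lam] q_def by (simp add: X_def)
  next
    case (Suc n)
    have "absv (X (Suc (Suc n)) - X (Suc n)) \<le> absv (X (Suc n) - X n) / real p"
      unfolding XS[of "Suc n"] XS[of n] by (rule T_lip[OF lam]) (use inD[of "Suc n"] inD[of n] XS in auto)
    also have "\<dots> \<le> (1 / real p) ^ n * q / real p" using Suc by (simp add: divide_right_mono)
    finally show ?case by (simp add: field_simps)
  qed
  have cau: "absv (X m - X n) \<le> (1 / real p) ^ n * q" if "n \<le> m" for m n
    using that
  proof (induction m)
    case 0 thus ?case using q by simp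
  next
    case (Suc m)
    show ?case
    proof (cases "n = Suc m")
      case True thus ?thesis using q by simp
    next
      case False
      hence nm: "n \<le> m" using Suc by simp
      have "(1 / real p) ^ m \<le> (1 / real p) ^ n" using nm p2 by (intro power_decreasing) auto
      hence "absv (X (Suc m) - X m) \<le> (1 / real p) ^ n * q"
        using step[of m] q by (meson mult_right_mono order_trans)
      moreover have "absv (X m - X n) \<le> (1 / real p) ^ n * q" using Suc.IH nm .
      ultimately have "absv ((X (Suc m) - X m) + (X m - X n)) \<le> (1 / real p) ^ n * q" by (rule ultra_le)
      thus ?thesis by simp
    qed
  qed
  have "(\<lambda>n. (1 / real p) ^ n * q) \<longlonglongrightarrow> 0 * q"
    by (intro tendsto_mult LIMSEQ_power_zero) (use p2 in auto)
  hence lim0: "(\<lambda>n. (1 / real p) ^ n * q) \<longlonglongrightarrow> 0" by simp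
  have "\<forall>e>0. \<exists>N. \<forall>m\<ge>N. \<forall>n\<ge>N. absv (X m - X n) < e"
  proof (intro allI impI)
    fix e :: real assume e: "e > 0"
    have "eventually (\<lambda>n. (1 / real p) ^ n * q < e) sequentially"
      using order_tendstoD(2)[OF lim0 e] .
    then obtain N0 where "\<forall>n\<ge>N0. (1 / real p) ^ n * q < e" unfolding eventually_sequentially by blast
    hence N: "(1 / real p) ^ N0 * q < e" by simp
    define N where "N = N0"
    note N = N[folded N_def]
    have mono: "(1 / real p) ^ k * q \<le> (1 / real p) ^ N * q" if "N \<le> k" for k
      using that p2 q by (intro mult_right_mono power_decreasing) auto
    show "\<exists>N. \<forall>m\<ge>N. \<forall>n\<ge>N. absv (X m - X n) < e"
    proof (intro exI allI impI)
      fix m n assume "N \<le> m" "N \<le> n"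
      show "absv (X m - X n) < e"
      proof (cases "n \<le> m")
        case True thus ?thesis using cau[OF True] mono[OF \<open>N \<le> n\<close>] N by linarith
      next
        case False
        hence "m \<le> n" by simp
        thus ?thesis using cau[of m n] mono[OF \<open>N \<le> m\<close>] N commute[of "X m" "X n"] by linarith
      qed
    qed
  qed
  then obtain L where L: "(\<lambda>n. absv (X n - L)) \<longlonglongrightarrow> 0" using complete by blast
  have Lq: "absv (L - 0) \<le> q"
    by (rule lim_le[OF L, of "\<lambda>n. 0"]) (use inv in auto)
  hence LD: "absv L \<le> 1 / real p" using q by simp
  have L1: "(\<lambda>n. absv (X (Suc n) - L)) \<longlonglongrightarrow> 0" using L by (rule LIMSEQ_Suc)
  have L2: "(\<lambda>n. absv (X (Suc n) - T lam L)) \<longlonglongrightarrow> 0"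
  proof (rule tendsto_sandwich[of "\<lambda>n. 0" _ sequentially "\<lambda>n. absv (X n - L)"])
    show "\<forall>\<^sub>F n in sequentially. absv (X (Suc n) - T lam L) \<le> absv (X n - L)"
    proof (intro always_eventually allI)
      fix n
      have "absv (X (Suc n) - T lam L) \<le> absv (X n - L) / real p"
        unfolding XS by (rule T_lip[OF lam inD LD])
      also have "\<dots> \<le> absv (X n - L)" by (rule divp_le) simp
      finally show "absv (X (Suc n) - T lam L) \<le> absv (X n - L)" .
    qed
  qed (use L in auto)
  have "absv (L - T lam L) \<le> 0" by (rule lim_le[OF L1 L2]) simp
  hence "T lam L = L" using nonneg[of "L - T lam L"] by (simp add: antisym)
  thus ?thesis using Lq q_def by auto
qed


lemma lam_nz: "absv (lam - 1) < 1 \<Longrightarrow> lam \<noteq> 0"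
  using lam_abs by fastforce

lemma fix_unique: assumes lam: "absv (lam - 1) < 1" and "absv s \<le> 1 / real p" "absv t \<le> 1 / real p"
  and "T lam s = s" "T lam t = t" shows "s = t"
proof -
  have "absv (s - t) \<le> absv (s - t) / real p" using T_lip[OF lam assms(2,3)] assms(4,5) by simp
  hence "absv (s - t) * real p \<le> absv (s - t)" using p2 by (simp add: le_divide_eq)
  hence "absv (s - t) * (real p - 1) \<le> 0" by (simp add: algebra_simps)
  moreover have "real p - 1 > 0" using p2 by simp
  ultimately have "absv (s - t) \<le> 0" by (simp add: mult_le_0_iff)
  hence "absv (s - t) = 0" using nonneg[of "s - t"] by linarith
  thus ?thesis by simp
qed

definition tt :: "'a \<Rightarrow> 'a" where "tt lam = hfix p absv a lam - 1"

lemma hfix: assumes lam: "absv (lam - 1) < 1"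
  shows "T lam (tt lam) = tt lam" "absv (tt lam) \<le> absv (Qv 1) / real p"
proof -
  obtain L where L: "absv L \<le> absv (Qv 1) / real p" "T lam L = L" using T_fix_exists[OF lam] by blast
  have LD: "absv L \<le> 1 / real p" using L q_le by linarith
  have "hfix p absv a lam = 1 + L" unfolding hfix_def
  proof (rule the_equality)
    show "absv (1 + L - 1) \<le> absv (Qv 1) / real p \<and> Qstar p absv a lam (1 + L) = 1 + L"
      using L T_fix_iff[OF lam_nz[OF lam]] by simp
  next
    fix z assume z: "absv (z - 1) \<le> absv (Qv 1) / real p \<and> Qstar p absv a lam z = z"
    have zz: "z = 1 + (z - 1)" by simp
    have "T lam (z - 1) = z - 1" using z T_fix_iff[OF lam_nz[OF lam], of "z - 1"] by simp
    moreover have "absv (z - 1) \<le> 1 / real p" using z q_le by linarith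
    ultimately have "z - 1 = L" using fix_unique[OF lam _ LD _ L(2)] by blast
    thus "z = 1 + L" by (simp add: algebra_simps)
  qed
  thus "T lam (tt lam) = tt lam" "absv (tt lam) \<le> absv (Qv 1) / real p" unfolding tt_def using L by simp_all
qed

lemma tt_D: "absv (lam - 1) < 1 \<Longrightarrow> absv (tt lam) \<le> 1 / real p"
  using hfix(2) q_le by (meson order_trans)

lemma chi0: "chi 0 = 0" unfolding chi_def by simp

lemma dt: assumes l0: "absv (lam0 - 1) < 1" and l1: "absv (lam1 - 1) < 1"
  shows "absv (tt lam0 - tt lam1) \<le> absv (lam0 - lam1)"
proof (rule ccontr)
  assume "\<not> ?thesis"
  hence gt: "absv (lam0 - lam1) < absv (tt lam0 - tt lam1)" by simp
  define t0 where "t0 = tt lam0"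
  define t1 where "t1 = tt lam1"
  have f0: "T lam0 t0 = t0" and f1: "T lam1 t1 = t1" using hfix(1) l0 l1 t0_def t1_def by auto
  have D0: "absv t0 \<le> 1 / real p" and D1: "absv t1 \<le> 1 / real p" using tt_D l0 l1 t0_def t1_def by auto
  have n0: "lam0 \<noteq> 0" and n1: "lam1 \<noteq> 0" using lam_nz l0 l1 by auto
  have Ft1: "F t1 = (lam1 / of_nat p) * (t1 - chi t1)"
    using f1 n1 pnz unfolding T_def by (simp add: field_simps)
  have e2: "T lam0 t1 - T lam1 t1 = ((lam1 - lam0) / lam0) * (t1 - chi t1)"
    unfolding T_def Ft1 using n0 n1 pnz by (simp add: field_simps)
  have "absv (t1 - chi t1) \<le> 1 / real p"
  proof (rule ultra_le_diff[OF D1])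
    show "absv (chi t1) \<le> 1 / real p"
      using chi_lip[OF D1, of 0] chi0 D1 p2 by simp (meson divp_le nonneg order_trans)
  qed
  hence "absv (T lam0 t1 - T lam1 t1) \<le> absv (lam0 - lam1) * 1"
    unfolding e2 mult divide lam_abs[OF l0] using commute[of lam1 lam0] pinv_le1
    by (simp add: mult_left_mono order_trans) (metis mult_left_mono nonneg order_trans mult.right_neutral)
  hence b2: "absv (T lam0 t1 - T lam1 t1) < absv (t0 - t1)" using gt t0_def t1_def by simp
  have b1: "absv (T lam0 t0 - T lam0 t1) \<le> absv (t0 - t1) / real p" by (rule T_lip[OF l0 D0 D1])
  have "t0 - t1 = (T lam0 t0 - T lam0 t1) + (T lam0 t1 - T lam1 t1)" using f0 f1 by simp
  hence "absv (t0 - t1) \<le> max (absv (T lam0 t0 - T lam0 t1)) (absv (T lam0 t1 - T lam1 t1))"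
    by (metis ultra)
  hence "absv (t0 - t1) \<le> absv (t0 - t1) / real p" using b1 b2 by linarith
  moreover have pos: "absv (t0 - t1) > 0" using gt nonneg[of "lam0 - lam1"] unfolding t0_def t1_def by linarith
  ultimately have "absv (t0 - t1) * real p \<le> absv (t0 - t1) * 1" using p2 by (simp add: le_divide_eq)
  hence "real p \<le> 1" using pos by (simp add: mult_le_cancel_left_pos)
  thus False using p2 by simp
qed


definition G :: "'a \<Rightarrow> 'a \<Rightarrow> 'a" where
  "G lam w = w + (F (tt lam + w) - F (tt lam)) + (lam / of_nat p) * (chi (tt lam + w) - chi (tt lam) - w)"

lemma G0: "G lam 0 = 0" unfolding G_def by simp

lemma Qlam_G: assumes lam: "absv (lam - 1) < 1" shows "Qlam p absv a lam (1 + w) = 1 + G lam w"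
proof -
  define t where "t = tt lam"
  have h: "hfix p absv a lam = 1 + t" unfolding t_def tt_def by simp
  have "Qstar p absv a lam (1 + t) = 1 + t" using hfix(1)[OF lam] T_fix_iff[OF lam_nz[OF lam]] t_def by simp
  hence z: "F t + (lam / of_nat p) * (chi t - t) = 0" using Qstar_eq[of lam t] by simp
  have "Qlam p absv a lam (1 + w) = Qstar p absv a lam (1 + (t + w)) + 1 - (1 + t)"
    unfolding Qlam_def Let_def h Qstar_def by (simp add: algebra_simps)
  also have "\<dots> = (1 + (t + w)) + F (t + w) + (lam / of_nat p) * (chi (t + w) - (t + w)) - t"
    using Qstar_eq[of lam "t + w"] by (simp add: algebra_simps)
  also have "\<dots> = 1 + G lam w + (F t + (lam / of_nat p) * (chi t - t))"
    unfolding G_def t_def[symmetric] by (simp add: algebra_simps diff_divide_distrib add_divide_distrib)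
  finally show ?thesis using z by simp
qed

lemma absp_div: "absv lam = 1 \<Longrightarrow> absv (lam / of_nat p) = real p"
  using absp p2 by simp

lemma core: assumes l0: "absv (lam0 - 1) < 1" and l1: "absv (lam1 - 1) < 1"
  and w0: "absv w0 \<le> 1 / real p" and w1: "absv w1 \<le> 1 / real p"
  and dl: "absv (lam0 - lam1) \<le> absv (w0 - w1)"
  shows "absv (G lam0 w0 - G lam1 w1) = real p * absv (w0 - w1)"
proof (cases "w0 = w1")
  case True
  hence "lam0 = lam1" using dl nonneg[of "lam0 - lam1"] by simp
  thus ?thesis using True by simp
next
  case False
  define d where "d = absv (w0 - w1)"
  have "absv (w0 - w1) \<noteq> 0" using False by simp
  hence d: "d > 0" using nonneg[of "w0 - w1"] d_def by linarith
  have pd: "d < real p * d" using d p2 by simp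
  define t0 where "t0 = tt lam0"
  define t1 where "t1 = tt lam1"
  have D0: "absv t0 \<le> 1 / real p" and D1: "absv t1 \<le> 1 / real p" using tt_D l0 l1 t0_def t1_def by auto
  have D0': "absv (t0 + w0) \<le> 1 / real p" using ultra_le[OF D0 w0] .
  have D1': "absv (t1 + w1) \<le> 1 / real p" using ultra_le[OF D1 w1] .
  have dt': "absv (t0 - t1) \<le> d" using dt[OF l0 l1] dl unfolding d_def t0_def t1_def by linarith
  have dd: "absv ((t0 + w0) - (t1 + w1)) \<le> d"
  proof -
    have e: "(t0 + w0) - (t1 + w1) = (t0 - t1) + (w0 - w1)" by simp
    show ?thesis unfolding e using ultra_le[OF dt', of "w0 - w1"] d_def by simp
  qed
  define E1 where "E1 = (F (t0 + w0) - F (t1 + w1)) - (F t0 - F t1)"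
  define E2 where "E2 = (chi (t0 + w0) - chi (t1 + w1)) - (chi t0 - chi t1)"
  define E3 where "E3 = (chi (t1 + w1) - chi t1) - w1"
  define E where "E = (w0 - w1) + (E1 + ((lam0 / of_nat p) * E2 + ((lam0 - lam1) / of_nat p) * E3))"
  have iden: "G lam0 w0 - G lam1 w1 = - ((lam0 / of_nat p) * (w0 - w1)) + E"
    unfolding G_def E_def E1_def E2_def E3_def t0_def t1_def by (simp add: algebra_simps diff_divide_distrib)
  have b0: "absv (w0 - w1) < real p * d" using pd d_def by simp
  have b1: "absv E1 < real p * d"
  proof -
    have "absv E1 \<le> d" unfolding E1_def
      by (rule ultra_le_diff) (use F_lip[OF D0' D1'] dd F_lip[OF D0 D1] dt' in auto)
    thus ?thesis using pd by linarith
  qed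
  have b2: "absv ((lam0 / of_nat p) * E2) < real p * d"
  proof -
    have "absv (chi (t0 + w0) - chi (t1 + w1)) \<le> d / real p"
      using chi_lip[OF D0' D1'] dd by (meson divide_right_mono of_nat_0_le_iff order_trans)
    moreover have "absv (chi t0 - chi t1) \<le> d / real p"
      using chi_lip[OF D0 D1] dt' by (meson divide_right_mono of_nat_0_le_iff order_trans)
    ultimately have "absv E2 \<le> d / real p" unfolding E2_def by (rule ultra_le_diff)
    hence "real p * absv E2 \<le> real p * (d / real p)" by (intro mult_left_mono) auto
    moreover have "absv ((lam0 / of_nat p) * E2) = real p * absv E2"
      by (simp only: mult absp_div[OF lam_abs[OF l0]])
    ultimately have "absv ((lam0 / of_nat p) * E2) \<le> real p * (d / real p)" by simp
    thus ?thesis using pd p2 by simp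
  qed
  have b3: "absv (((lam0 - lam1) / of_nat p) * E3) < real p * d"
  proof -
    have "absv (chi (t1 + w1) - chi t1) \<le> absv w1 / real p" using chi_lip[OF D1' D1] by simp
    hence "absv (chi (t1 + w1) - chi t1) \<le> 1 / real p" using w1 divp_le[of "absv w1"] by simp
    hence "absv E3 \<le> 1 / real p" unfolding E3_def by (rule ultra_le_diff) (rule w1)
    hence "(absv (lam0 - lam1) * real p) * absv E3 \<le> (absv (lam0 - lam1) * real p) * (1 / real p)"
      by (intro mult_left_mono) auto
    moreover have "absv (((lam0 - lam1) / of_nat p) * E3) = (absv (lam0 - lam1) * real p) * absv E3"
      using absp p2 by simp
    ultimately have "absv (((lam0 - lam1) / of_nat p) * E3) \<le> (absv (lam0 - lam1) * real p) * (1 / real p)"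
      by simp
    also have "\<dots> = absv (lam0 - lam1)" using p2 by simp
    finally show ?thesis using dl d_def pd by linarith
  qed
  have bE: "absv E < real p * d" unfolding E_def
    by (intro ultra_lt b0 b1 b2 b3)
  have main: "absv (- ((lam0 / of_nat p) * (w0 - w1))) = real p * d"
    unfolding d_def by (simp only: minus mult absp_div[OF lam_abs[OF l0]])
  show ?thesis unfolding iden using ultra_strict[of E "- ((lam0 / of_nat p) * (w0 - w1))"] main bE d_def
    by simp
qed


lemma iter:
  assumes l0: "absv (lam0 - 1) < 1" and l1: "absv (lam1 - 1) < 1"
    and x0: "absv (x0 - 1) \<le> real p powr (- real M)"
    and x1: "absv (x1 - 1) \<le> real p powr (- real M)"
    and dl: "absv (lam0 - lam1) = absv (x0 - x1)"
  shows "absv ((Qlam p absv a lam0 ^^ M) x0 - (Qlam p absv a lam1 ^^ M) x1)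
           = real p ^ M * absv (lam0 - lam1)"
proof -
  define e where "e = real p powr (- real M)"
  define Y0 where "Y0 k = (Qlam p absv a lam0 ^^ k) x0" for k
  define Y1 where "Y1 k = (Qlam p absv a lam1 ^^ k) x1" for k
  have pe: "real p ^ M * e = 1" unfolding e_def using p2
    by (simp add: powr_realpow[symmetric] powr_add[symmetric])
  have e0: "e \<ge> 0" unfolding e_def by simp
  have small: "real p ^ k * e \<le> 1 / real p" if "k < M" for k
  proof -
    have "real p ^ Suc k * e \<le> real p ^ M * e"
      using that p2 e0 by (intro mult_right_mono power_increasing) auto
    hence "real p * (real p ^ k * e) \<le> 1" using pe by (simp add: mult.assoc)
    thus ?thesis using p2 by (simp add: le_divide_eq mult.commute)
  qed
  have "k \<le> M \<longrightarrow> absv (Y0 k - 1) \<le> real p ^ k * e \<and> absv (Y1 k - 1) \<le> real p ^ k * e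
        \<and> absv (Y0 k - Y1 k) = real p ^ k * absv (lam0 - lam1)" for k
  proof (induction k)
    case 0 thus ?case using x0 x1 dl unfolding Y0_def Y1_def e_def by simp
  next
    case (Suc k)
    show ?case
    proof
      assume k: "Suc k \<le> M"
      define w0 where "w0 = Y0 k - 1"
      define w1 where "w1 = Y1 k - 1"
      have IH: "absv w0 \<le> real p ^ k * e" "absv w1 \<le> real p ^ k * e"
        "absv (w0 - w1) = real p ^ k * absv (lam0 - lam1)"
        using Suc.IH k unfolding w0_def w1_def by auto
      have W0: "absv w0 \<le> 1 / real p" and W1: "absv w1 \<le> 1 / real p" using IH small[of k] k by auto
      have S0: "Y0 (Suc k) = 1 + G lam0 w0" unfolding Y0_def w0_def
        using Qlam_G[OF l0, of "(Qlam p absv a lam0 ^^ k) x0 - 1"] by simp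
      have S1: "Y1 (Suc k) = 1 + G lam1 w1" unfolding Y1_def w1_def
        using Qlam_G[OF l1, of "(Qlam p absv a lam1 ^^ k) x1 - 1"] by simp
      have z0: "absv (0::'a) \<le> 1 / real p" by simp
      have a0: "absv (Y0 (Suc k) - 1) = real p * absv w0"
        using core[OF l0 l0 W0 z0] S0 G0 by simp
      have a1: "absv (Y1 (Suc k) - 1) = real p * absv w1"
        using core[OF l1 l1 W1 z0] S1 G0 by simp
      have dl': "absv (lam0 - lam1) \<le> absv (w0 - w1)"
      proof -
        have "(1::real) \<le> real p ^ k" using p2 by (simp add: one_le_power)
        hence "1 * absv (lam0 - lam1) \<le> real p ^ k * absv (lam0 - lam1)"
          by (intro mult_right_mono) auto
        thus ?thesis unfolding IH(3) by simp
      qed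
      have a2: "absv (Y0 (Suc k) - Y1 (Suc k)) = real p * absv (w0 - w1)"
        using core[OF l0 l1 W0 W1 dl'] S0 S1 by simp
      show "absv (Y0 (Suc k) - 1) \<le> real p ^ Suc k * e \<and> absv (Y1 (Suc k) - 1) \<le> real p ^ Suc k * e
        \<and> absv (Y0 (Suc k) - Y1 (Suc k)) = real p ^ Suc k * absv (lam0 - lam1)"
        using a0 a1 a2 IH p2 by (simp add: mult.assoc mult_left_mono)
    qed
  qed
  thus ?thesis unfolding Y0_def Y1_def by auto
qed

end

theorem lemma3p12:
  fixes p M :: nat and absv :: "'a::field \<Rightarrow> real" and r :: real
    and a :: "nat \<Rightarrow> 'a" and x0 x1 lam0 lam1 :: 'a
  assumes "prime p"
    and "is_Cp p absv"
    and "\<exists>c. c \<noteq> 0 \<and> absv c = r" and "r > 1"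
    and "in_H absv r a"
    and "H_norm absv r a < real p powr (- 1 / (real p - 1))"
    and "M \<ge> 1"
    and "absv (x0 - 1) \<le> real p powr (- real M)"
    and "absv (x1 - 1) \<le> real p powr (- real M)"
    and "absv (lam0 - 1) < 1" and "absv (lam1 - 1) < 1"
    and "absv (lam0 - lam1) = absv (x0 - x1)"
  shows "absv ((Qlam p absv a lam0 ^^ M) x0 - (Qlam p absv a lam1 ^^ M) x1)
           = real p ^ M * absv (lam0 - lam1)"
proof -
  interpret cps p absv r a
    by unfold_locales (use assms in auto)
  show ?thesis by (rule iter) (use assms in auto)
qed

end
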